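(* Let $n\in\mathbb N$, let $f$ be extremal for $M_n$ with $f(0)=e^{-t}$, $t>0$, written as $f(z)=\exp\big(-\sum_{j=1}^N\lambda_j\frac{1+\alpha_jz}{1-\alpha_jz}\big)$, and let $g(z)=-\sum_{j=1}^N\lambda_j\frac{1+\alpha_jz}{1-\alpha_jz}$ (a rational function, so $f=e^g$). Then $g$ has exactly $N$ zeros $\beta_1,\dots,\beta_N$, all lying on $\partial\mathbb D$, and \[g(z)=t\,\frac{\prod_{j=1}^N(z-\beta_j)}{\prod_{j=1}^N(z-\overline{\alpha_j})}.\]
   Context: $\mathbb D$ is the open unit disc; $\mathcal B_0=\{f$ holomorphic on $\mathbb D: 0<|f|\le1\}$; $M_n(f)=\mathrm{Re}\,a_n$; $f\in\mathcal B_0$ is extremal for $M_n$ if $M_n(f)\ge M_n(F)$ for all $F\in\mathcal B_0$. It is known that an extremal $f$ with $f(0)>0$ has the displayed form with $1\le N\le n$, $\lambda_j>0$ and distinct $\alpha_j\in\partial\mathbb D$. *)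

theory Defs
  imports "HOL-Complex_Analysis.Complex_Analysis"
begin

definition B0 :: "(complex \<Rightarrow> complex) set" where
  "B0 = {f. f holomorphic_on ball 0 1 \<and> (\<forall>z\<in>ball 0 1. 0 < norm (f z) \<and> norm (f z) \<le> 1)}"

definition taylor_coeff :: "nat \<Rightarrow> (complex \<Rightarrow> complex) \<Rightarrow> complex" where
  "taylor_coeff n f = (deriv ^^ n) f 0 / of_nat (fact n)"

definition M :: "nat \<Rightarrow> (complex \<Rightarrow> complex) \<Rightarrow> real" where
  "M n f = Re (taylor_coeff n f)"

definition extremal :: "nat \<Rightarrow> (complex \<Rightarrow> complex) \<Rightarrow> bool" where
  "extremal n f \<longleftrightarrow> f \<in> B0 \<and> (\<forall>F\<in>B0. M n F \<le> M n f)"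

end

theory Submission
  imports Defs "HOL-Computational_Algebra.Fundamental_Theorem_Algebra"
begin

lemma key_alg:
  fixes a z l :: complex
  assumes "a * cnj a = 1" "a * z \<noteq> 1"
  shows "- (l * (1 + a * z) / (1 - a * z) * (z - cnj a)) = l * (z + cnj a)"
proof -
  have "1 - a*z \<noteq> 0" using assms by auto
  moreover have "(1 + a * z) * (z - cnj a) = - ((z + cnj a) * (1 - a * z))"
    using assms(1) by (simp add: algebra_simps)
  ultimately show ?thesis by (simp add: field_simps)
qed

lemma re_cayley:
  fixes w :: complex
  assumes "w \<noteq> 1"
  shows "Re ((1 + w) / (1 - w)) = (1 - (norm w)^2) / (norm (1 - w))^2"
proof -
  have n0: "cnj (1 - w) \<noteq> 0" using assms by simp
  have d: "(1 - w) * cnj (1 - w) = of_real ((norm (1-w))^2)" using complex_norm_square[of "1-w"] by simp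
  have "(1 + w) / (1 - w) = ((1 + w) * cnj (1 - w)) / ((1 - w) * cnj (1 - w))"
    using n0 by simp
  also have "\<dots> = ((1 + w) * cnj (1 - w)) / of_real ((norm (1-w))^2)" by (simp only: d)
  also have "(1 + w) * cnj (1 - w) = 1 - w * cnj w + (w - cnj w)"
    by (simp add: algebra_simps)
  also have "w * cnj w = of_real ((norm w)^2)" using complex_norm_square[of w] by simp
  finally show ?thesis by (simp add: Re_divide_of_real)
qed

lemma w_sq:
  fixes w :: complex
  assumes "norm w = 1" "w \<noteq> 1"
  shows "Re (w / (1 - w)^2) < 0"
proof -
  have wc: "w * cnj w = 1" using assms(1) by (metis complex_norm_square mult_1 of_real_1 power_one)
  have w0: "w \<noteq> 0" using assms by auto
  have iw: "inverse w = cnj w" using wc w0 by (metis inverse_unique)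
  have "(1 - w)^2 / w = inverse w - 2 + w"
    using w0 by (simp add: field_simps power2_eq_square)
  also have "\<dots> = of_real (2 * Re w - 2)"
    unfolding iw by (simp add: complex_eq_iff)
  finally have e: "(1 - w)^2 / w = of_real (2 * Re w - 2)" .
  have "w / (1 - w)^2 = inverse ((1 - w)^2 / w)" by simp
  also have "\<dots> = of_real (1 / (2 * Re w - 2))" unfolding e by (simp add: divide_inverse)
  finally have e2: "w / (1 - w)^2 = of_real (1 / (2 * Re w - 2))" .
  have "Re w < 1"
  proof -
    have "Re w \<le> 1" using assms complex_Re_le_cmod by (metis)
    moreover have "Re w \<noteq> 1"
    proof
      assume "Re w = 1"
      hence "(Im w)^2 = 0" using assms(1) unfolding norm_complex_def by (simp)
      thus False using \<open>Re w = 1\<close> assms(2) by (simp add: complex_eq_iff)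
    qed
    ultimately show ?thesis by simp
  qed
  then show ?thesis unfolding e2 by (simp add: divide_simps)
qed

lemma deriv_cayley:
  fixes a b l :: complex
  assumes "a * b \<noteq> 1"
  shows "((\<lambda>z. l * (1 + a * z) / (1 - a * z)) has_field_derivative (l * (2 * a) / (1 - a * b)^2)) (at b)"
proof -
  have "1 - a * b \<noteq> 0" using assms by simp
  thus ?thesis
    by (auto intro!: derivative_eq_intros simp: field_simps power2_eq_square)
qed

lemma main:
  fixes n N :: nat and f g :: "complex \<Rightarrow> complex" and t :: real
    and lam :: "nat \<Rightarrow> real" and \<alpha> :: "nat \<Rightarrow> complex"
  assumes f0: "f 0 = complex_of_real (exp (- t))"
    and tpos: "t > 0"
    and N: "1 \<le> N"
    and lam_pos: "\<And>j. j \<in> {1..N} \<Longrightarrow> lam j > 0"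
    and \<alpha>_circ: "\<And>j. j \<in> {1..N} \<Longrightarrow> norm (\<alpha> j) = 1"
    and \<alpha>_dist: "inj_on \<alpha> {1..N}"
    and g_def: "g = (\<lambda>z. - (\<Sum>j=1..N. complex_of_real (lam j) * (1 + \<alpha> j * z) / (1 - \<alpha> j * z)))"
    and f_form: "\<And>z. z \<in> ball 0 1 \<Longrightarrow> f z = exp (g z)"
  shows "\<exists>\<beta> :: nat \<Rightarrow> complex.
           inj_on \<beta> {1..N}
         \<and> (\<forall>j\<in>{1..N}. norm (\<beta> j) = 1)
         \<and> {z. (\<forall>j\<in>{1..N}. \<alpha> j * z \<noteq> 1) \<and> g z = 0} = \<beta> ` {1..N}
         \<and> (\<forall>z. (\<forall>j\<in>{1..N}. \<alpha> j * z \<noteq> 1) \<longrightarrow>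
                g z = complex_of_real t * (\<Prod>j=1..N. (z - \<beta> j)) / (\<Prod>j=1..N. (z - cnj (\<alpha> j))))"
proof -
  define A where "A = {1..N}"
  have finA: "finite A" unfolding A_def by simp
  have ac: "\<alpha> j * cnj (\<alpha> j) = 1" if "j \<in> A" for j
    using \<alpha>_circ[of j] that complex_norm_square[of "\<alpha> j"] unfolding A_def by simp
  have pole: "\<alpha> j * z = 1 \<longleftrightarrow> z = cnj (\<alpha> j)" if "j \<in> A" for j z
  proof
    assume h: "\<alpha> j * z = 1"
    have "z = (cnj (\<alpha> j) * \<alpha> j) * z" using ac[OF that] by (simp add: mult.commute)
    also have "\<dots> = cnj (\<alpha> j)" using h by (simp add: mult.assoc)
    finally show "z = cnj (\<alpha> j)" .
  qed (use ac[OF that] in simp)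
  define Q where "Q = (\<lambda>z. \<Prod>j\<in>A. (z - cnj (\<alpha> j)))"
  define NP where "NP = (\<lambda>z. \<forall>j\<in>A. \<alpha> j * z \<noteq> 1)"
  have Qnz: "Q z \<noteq> 0" if "NP z" for z
    using that pole finA unfolding Q_def NP_def by auto
  define Pf where "Pf = (\<lambda>z. \<Sum>j\<in>A. of_real (lam j) * (z + cnj (\<alpha> j)) * (\<Prod>i\<in>A-{j}. (z - cnj (\<alpha> i))))"
  have gA: "g z = - (\<Sum>j\<in>A. complex_of_real (lam j) * (1 + \<alpha> j * z) / (1 - \<alpha> j * z))" for z
    unfolding g_def A_def by simp
  have gQ: "g z * Q z = Pf z" if "NP z" for z
  proof -
    have "g z * Q z = (\<Sum>j\<in>A. - (complex_of_real (lam j) * (1 + \<alpha> j * z) / (1 - \<alpha> j * z) * Q z))"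
      unfolding gA by (simp add: sum_distrib_right sum_negf)
    also have "\<dots> = Pf z" unfolding Pf_def
    proof (rule sum.cong[OF refl])
      fix j assume j: "j \<in> A"
      have "Q z = (z - cnj (\<alpha> j)) * (\<Prod>i\<in>A-{j}. (z - cnj (\<alpha> i)))"
        unfolding Q_def using prod.remove[OF finA j] by simp
      hence "- (complex_of_real (lam j) * (1 + \<alpha> j * z) / (1 - \<alpha> j * z) * Q z)
         = - (complex_of_real (lam j) * (1 + \<alpha> j * z) / (1 - \<alpha> j * z) * (z - cnj (\<alpha> j))) * (\<Prod>i\<in>A-{j}. (z - cnj (\<alpha> i)))"
        by (simp add: mult.assoc)
      also have "\<dots> = of_real (lam j) * (z + cnj (\<alpha> j)) * (\<Prod>i\<in>A-{j}. (z - cnj (\<alpha> i)))"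
        using key_alg[OF ac[OF j], of z "of_real (lam j)"] that j unfolding NP_def by simp
      finally show "- (complex_of_real (lam j) * (1 + \<alpha> j * z) / (1 - \<alpha> j * z) * Q z) = 
         of_real (lam j) * (z + cnj (\<alpha> j)) * (\<Prod>i\<in>A-{j}. (z - cnj (\<alpha> i)))" .
    qed
    finally show ?thesis .
  qed
  
  have sumlam: "(\<Sum>j\<in>A. lam j) = t"
  proof -
    have "f 0 = exp (g 0)" using f_form by simp
    also have "g 0 = of_real (- (\<Sum>j\<in>A. lam j))" unfolding gA by simp
    finally have "exp (- t) = exp (- (\<Sum>j\<in>A. lam j))"
      using f0 by (metis exp_of_real of_real_eq_iff)
    thus ?thesis by simp
  qed
  
  define cc where "cc = (\<lambda>j i. if i = j then cnj (\<alpha> j) else - cnj (\<alpha> i))"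
  define Pp where "Pp = (\<Sum>j\<in>A. smult (of_real (lam j)) (\<Prod>i\<in>A. [:cc j i, 1:]))"
  have polyPp: "poly Pp z = Pf z" for z
    unfolding Pp_def Pf_def poly_sum
  proof (rule sum.cong[OF refl])
    fix j assume j: "j \<in> A"
    have "(\<Prod>i\<in>A. poly [:cc j i, 1:] z) = poly [:cc j j, 1:] z * (\<Prod>i\<in>A-{j}. poly [:cc j i, 1:] z)"
      using prod.remove[OF finA j] by simp
    also have "(\<Prod>i\<in>A-{j}. poly [:cc j i, 1:] z) = (\<Prod>i\<in>A-{j}. (z - cnj (\<alpha> i)))"
      by (rule prod.cong) (auto simp: cc_def)
    finally show "poly (smult (of_real (lam j)) (\<Prod>i\<in>A. [:cc j i, 1:])) z =
      of_real (lam j) * (z + cnj (\<alpha> j)) * (\<Prod>i\<in>A-{j}. (z - cnj (\<alpha> i)))"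
      by (simp add: poly_prod cc_def algebra_simps)
  qed
  have cardA: "card A = N" unfolding A_def by simp
  have degprod: "degree (\<Prod>i\<in>A. [:cc j i, 1:]) = N" for j
    using degree_prod_eq_sum_degree[of A "\<lambda>i. [:cc j i, 1:]"] cardA by simp
  have lcprod: "coeff (\<Prod>i\<in>A. [:cc j i, 1:]) N = 1" for j
    using lead_coeff_prod[of "\<lambda>i. [:cc j i, 1:]" A] degprod[of j] by simp
  have degle: "degree Pp \<le> N" unfolding Pp_def
    by (rule degree_sum_le) (use finA in \<open>auto intro: order.trans[OF degree_smult_le] simp: degprod\<close>)
  have coeffN: "coeff Pp N = of_real t"
    unfolding Pp_def coeff_sum using lcprod sumlam finA by (simp flip: of_real_sum)
  have degPp: "degree Pp = N"
    using degle coeffN tpos le_degree[of Pp N] by fastforce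
  have lcPp: "lead_coeff Pp = of_real t" using degPp coeffN by simp
  obtain root where root: "smult (lead_coeff Pp) (\<Prod>i<degree Pp. [:-root i, 1:]) = Pp"
    using complex_poly_decompose' by blast
  have Pfroot: "Pf z = of_real t * (\<Prod>i<N. (z - root i))" for z
    using arg_cong[OF root, of "\<lambda>p. poly p z"] polyPp lcPp degPp by (simp add: poly_prod)

  have NPiff: "NP z \<longleftrightarrow> z \<notin> (\<lambda>j. cnj (\<alpha> j)) ` A" for z
    unfolding NP_def using pole by auto
  have openS: "open {z. NP z}"
  proof -
    have "{z. NP z} = - ((\<lambda>j. cnj (\<alpha> j)) ` A)" using NPiff by auto
    thus ?thesis using finA by (simp add: open_Compl finite_imp_closed)
  qed
  have gfrac: "g z = of_real t * (\<Prod>i<N. (z - root i)) / Q z" if "NP z" for z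
    using gQ[OF that] Qnz[OF that] Pfroot[of z] by (simp add: field_simps)
  
  have Pfpole: "Pf (cnj (\<alpha> k)) \<noteq> 0" if k: "k \<in> A" for k
  proof -
    let ?z = "cnj (\<alpha> k)"
    have rest: "(\<Sum>j\<in>A-{k}. of_real (lam j) * (?z + cnj (\<alpha> j)) * (\<Prod>i\<in>A-{j}. (?z - cnj (\<alpha> i)))) = 0"
    proof (rule sum.neutral, intro ballI)
      fix j assume j: "j \<in> A - {k}"
      have "(\<Prod>i\<in>A-{j}. (?z - cnj (\<alpha> i))) = 0"
        using finA k j by (subst prod_zero_iff) auto
      thus "of_real (lam j) * (?z + cnj (\<alpha> j)) * (\<Prod>i\<in>A-{j}. (?z - cnj (\<alpha> i))) = 0" by simp
    qed
    have "Pf ?z = of_real (lam k) * (?z + cnj (\<alpha> k)) * (\<Prod>i\<in>A-{k}. (?z - cnj (\<alpha> i)))"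
      unfolding Pf_def using rest by (simp add: sum.remove[OF finA k])
    moreover have "of_real (lam k) \<noteq> (0::complex)" using lam_pos[of k] k unfolding A_def by simp
    moreover have "?z + cnj (\<alpha> k) \<noteq> 0"
    proof -
      have "\<alpha> k \<noteq> 0" using \<alpha>_circ[of k] k unfolding A_def by auto
      hence "?z \<noteq> 0" by simp
      thus ?thesis by (metis add_cancel_right_left complex_cnj_zero_iff mult_2 mult_eq_0_iff zero_neq_numeral)
    qed
    moreover have "(\<Prod>i\<in>A-{k}. (?z - cnj (\<alpha> i))) \<noteq> 0"
    proof -
      have "?z \<noteq> cnj (\<alpha> i)" if "i \<in> A - {k}" for i
      proof
        assume "?z = cnj (\<alpha> i)"
        hence "\<alpha> k = \<alpha> i" by simp
        hence "k = i" using inj_onD[OF \<alpha>_dist] k that unfolding A_def by blast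
        thus False using that by blast
      qed
      thus ?thesis using finA by (subst prod_zero_iff) auto
    qed
    ultimately show ?thesis by simp
  qed
  have rootNP: "NP (root i)" if "i < N" for i
  proof -
    have "Pf (root i) = 0" using Pfroot[of "root i"] that by (auto simp: prod_zero_iff)
    thus ?thesis using Pfpole unfolding NP_def using pole by auto
  qed
  have zeros: "(NP z \<and> g z = 0) \<longleftrightarrow> z \<in> root ` {..<N}" for z
  proof
    assume "NP z \<and> g z = 0"
    hence "Pf z = 0" using gQ[of z] by simp
    hence "(\<Prod>i<N. (z - root i)) = 0" using Pfroot[of z] tpos by simp
    thus "z \<in> root ` {..<N}" by (auto simp: prod_zero_iff)
  next
    assume "z \<in> root ` {..<N}"
    then obtain i where i: "i < N" "z = root i" by auto
    hence "NP z" using rootNP by simp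
    moreover have "Pf z = 0" using Pfroot[of z] i by (auto simp: prod_zero_iff)
    ultimately show "NP z \<and> g z = 0" using gQ Qnz by (metis divisors_zero)
  qed
  
  have circle: "norm z = 1" if "NP z" "g z = 0" for z
  proof -
    have wne: "\<alpha> j * z \<noteq> 1" if "j \<in> A" for j using \<open>NP z\<close> that unfolding NP_def by auto
    have nw: "norm (\<alpha> j * z) = norm z" if "j \<in> A" for j
      using \<alpha>_circ[of j] that unfolding A_def by (simp add: norm_mult)
    have "Re (g z) = - (\<Sum>j\<in>A. lam j * Re ((1 + \<alpha> j * z) / (1 - \<alpha> j * z)))"
      unfolding gA by (simp add: times_divide_eq_right[symmetric] del: times_divide_eq_right)
    also have "\<dots> = - (\<Sum>j\<in>A. lam j * ((1 - (norm z)^2) / (norm (1 - \<alpha> j * z))^2))"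
      using re_cayley wne nw by (intro arg_cong[where f=uminus] sum.cong) auto
    also have "\<dots> = - ((1 - (norm z)^2) * (\<Sum>j\<in>A. lam j / (norm (1 - \<alpha> j * z))^2))"
      by (simp add: sum_distrib_left field_simps)
    finally have e: "(1 - (norm z)^2) * (\<Sum>j\<in>A. lam j / (norm (1 - \<alpha> j * z))^2) = 0"
      using \<open>g z = 0\<close> by simp
    have "(\<Sum>j\<in>A. lam j / (norm (1 - \<alpha> j * z))^2) > 0"
    proof (rule sum_pos[OF finA])
      show "A \<noteq> {}" using N unfolding A_def by auto
      fix j assume j: "j \<in> A"
      have "1 - \<alpha> j * z \<noteq> 0" using wne[OF j] by simp
      thus "lam j / (norm (1 - \<alpha> j * z))^2 > 0" using lam_pos[of j] j unfolding A_def by simp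
    qed
    hence "(norm z)^2 = 1" using e by simp
    thus ?thesis using norm_ge_zero[of z] by (auto simp: power2_eq_1_iff)
  qed

  
  have injroot: "inj_on root {..<N}"
  proof (rule inj_onI, rule ccontr)
    fix i k assume i: "i \<in> {..<N}" and k: "k \<in> {..<N}" and eq: "root i = root k" and ne: "i \<noteq> k"
    define b where "b = root i"
    define R where "R = (\<lambda>z. \<Prod>m\<in>{..<N}-{i}-{k}. (z - root m))"
    have fin: "finite {..<N}" by simp
    have prodsplit: "(\<Prod>m<N. (z - root m)) = (z - b)^2 * R z" for z
    proof -
      have "(\<Prod>m<N. (z - root m)) = (z - root i) * (\<Prod>m\<in>{..<N}-{i}. (z - root m))"
        using prod.remove[OF fin i] by simp
      also have "(\<Prod>m\<in>{..<N}-{i}. (z - root m)) = (z - root k) * R z"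
        unfolding R_def using prod.remove[of "{..<N}-{i}" k] k ne by simp
      finally show ?thesis using eq unfolding b_def by (simp add: power2_eq_square mult.assoc)
    qed
    have bNP: "NP b" using rootNP i unfolding b_def by simp
    have gb: "g b = 0" using zeros[of b] i unfolding b_def by auto
    have nb: "norm b = 1" using circle[OF bNP gb] .
    define S where "S = {z. NP z}"
    define kk where "kk = (\<lambda>z. of_real t * R z / Q z)"
    have geq: "g z = (z - b)^2 * kk z" if "z \<in> S" for z
      using gfrac[of z] that prodsplit[of z] unfolding S_def kk_def by simp
    have "kk holomorphic_on S"
      unfolding kk_def R_def Q_def S_def
      using Qnz unfolding Q_def by (intro holomorphic_intros) auto
    hence "kk field_differentiable (at b)"
      using openS bNP unfolding S_def by (simp add: holomorphic_on_imp_differentiable_at)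
    then obtain D where D: "(kk has_field_derivative D) (at b)"
      unfolding field_differentiable_def by blast
    have "((\<lambda>z. (z - b)^2 * kk z) has_field_derivative 0) (at b)"
    proof -
      have h1: "((\<lambda>z. (z - b)^2) has_field_derivative 0) (at b)"
        by (auto intro!: derivative_eq_intros)
      have "((\<lambda>z. (z - b)^2 * kk z) has_field_derivative (0 * kk b + (b - b)^2 * D)) (at b)"
        using DERIV_mult[OF h1 D] by simp
      thus ?thesis by simp
    qed
    hence d0: "(g has_field_derivative 0) (at b)"
      by (rule has_field_derivative_transform_within_open[OF _ openS[folded S_def]])
         (use bNP geq S_def in auto)
    define G where "G = - (\<Sum>j\<in>A. of_real (lam j) * (2 * \<alpha> j) / (1 - \<alpha> j * b)^2)"
    have wne: "\<alpha> j * b \<noteq> 1" if "j \<in> A" for j using bNP that unfolding NP_def by auto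
    have "((\<lambda>z. - (\<Sum>j\<in>A. complex_of_real (lam j) * (1 + \<alpha> j * z) / (1 - \<alpha> j * z))) has_field_derivative G) (at b)"
      unfolding G_def
      by (intro DERIV_minus DERIV_sum deriv_cayley wne)
    moreover have "g = (\<lambda>z. - (\<Sum>j\<in>A. complex_of_real (lam j) * (1 + \<alpha> j * z) / (1 - \<alpha> j * z)))"
      by (rule ext, rule gA)
    ultimately have dG: "(g has_field_derivative G) (at b)" by simp
    have G0: "G = 0" using DERIV_unique[OF dG d0] .
    have reofr: "\<And>c x. Re (complex_of_real c * x) = c * Re x" by simp
    have "b * G = (\<Sum>j\<in>A. of_real (- (2 * lam j)) * ((\<alpha> j * b) / (1 - \<alpha> j * b)^2))"
      unfolding G_def sum_distrib_left mult_minus_right sum_negf[symmetric]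
      by (rule sum.cong) (auto simp: field_simps)
    hence "Re (b * G) = (\<Sum>j\<in>A. - (2 * lam j) * Re ((\<alpha> j * b) / (1 - \<alpha> j * b)^2))"
      using reofr by (simp only: Re_sum)
    also have "\<dots> > 0"
    proof (rule sum_pos[OF finA])
      show "A \<noteq> {}" using N unfolding A_def by auto
      fix j assume j: "j \<in> A"
      have "norm (\<alpha> j * b) = 1" using \<alpha>_circ[of j] j nb unfolding A_def by (simp add: norm_mult)
      hence "Re ((\<alpha> j * b) / (1 - \<alpha> j * b)^2) < 0" using w_sq wne[OF j] by blast
      thus "- (2 * lam j) * Re ((\<alpha> j * b) / (1 - \<alpha> j * b)^2) > 0"
        using lam_pos[of j] j unfolding A_def by (simp add: mult_pos_neg)
    qed
    finally show False using G0 by simp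
  qed
  define \<beta> where "\<beta> = (\<lambda>j. root (j - 1))"
  have img: "\<beta> ` {1..N} = root ` {..<N}"
  proof -
    have "{1..N} = Suc ` {..<N}" by (simp add: image_Suc_lessThan)
    thus ?thesis unfolding \<beta>_def by (simp add: image_image)
  qed
  have prodb: "(\<Prod>j=1..N. (z - \<beta> j)) = (\<Prod>i<N. (z - root i))" for z
    unfolding \<beta>_def using prod.atLeast1_atMost_eq[of "\<lambda>j. z - root (j - 1)" N] by simp
  show ?thesis
  proof (intro exI conjI allI impI ballI)
    show "inj_on \<beta> {1..N}"
    proof (rule inj_onI)
      fix i k assume i: "i \<in> {1..N}" and k: "k \<in> {1..N}" and e: "\<beta> i = \<beta> k"
      have "i - 1 = k - 1"
      proof -
        have "i - 1 \<in> {..<N}" "k - 1 \<in> {..<N}" using i k by auto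
        thus ?thesis using inj_onD[OF injroot e[unfolded \<beta>_def]] by blast
      qed
      thus "i = k" using i k by (cases i; cases k) auto
    qed
  next
    fix j assume j: "j \<in> {1..N}"
    have "\<beta> j \<in> root ` {..<N}" using img j by blast
    thus "norm (\<beta> j) = 1" using zeros circle by blast
  next
    show "{z. (\<forall>j\<in>{1..N}. \<alpha> j * z \<noteq> 1) \<and> g z = 0} = \<beta> ` {1..N}"
    proof -
      have "{z. (\<forall>j\<in>{1..N}. \<alpha> j * z \<noteq> 1) \<and> g z = 0} = {z. NP z \<and> g z = 0}"
        unfolding NP_def A_def by simp
      also have "\<dots> = root ` {..<N}" using zeros by blast
      finally show ?thesis using img by simp
    qed
  next
    fix z assume "\<forall>j\<in>{1..N}. \<alpha> j * z \<noteq> 1"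
    hence "NP z" unfolding NP_def A_def .
    thus "g z = complex_of_real t * (\<Prod>j=1..N. (z - \<beta> j)) / (\<Prod>j=1..N. (z - cnj (\<alpha> j)))"
      using gfrac prodb unfolding Q_def A_def by simp
  qed
qed

theorem lemma8:
  fixes n N :: nat and f g :: "complex \<Rightarrow> complex" and t :: real
    and lam :: "nat \<Rightarrow> real" and \<alpha> :: "nat \<Rightarrow> complex"
  assumes ext: "extremal n f"
    and f0: "f 0 = complex_of_real (exp (- t))"
    and tpos: "t > 0"
    and N: "1 \<le> N" "N \<le> n"
    and lam_pos: "\<And>j. j \<in> {1..N} \<Longrightarrow> lam j > 0"
    and \<alpha>_circ: "\<And>j. j \<in> {1..N} \<Longrightarrow> norm (\<alpha> j) = 1"
    and \<alpha>_dist: "inj_on \<alpha> {1..N}"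
    and g_def: "g = (\<lambda>z. - (\<Sum>j=1..N. complex_of_real (lam j) * (1 + \<alpha> j * z) / (1 - \<alpha> j * z)))"
    and f_form: "\<And>z. z \<in> ball 0 1 \<Longrightarrow> f z = exp (g z)"
  shows "\<exists>\<beta> :: nat \<Rightarrow> complex.
           inj_on \<beta> {1..N}
         \<and> (\<forall>j\<in>{1..N}. norm (\<beta> j) = 1)
         \<and> {z. (\<forall>j\<in>{1..N}. \<alpha> j * z \<noteq> 1) \<and> g z = 0} = \<beta> ` {1..N}
         \<and> (\<forall>z. (\<forall>j\<in>{1..N}. \<alpha> j * z \<noteq> 1) \<longrightarrow>
                g z = complex_of_real t * (\<Prod>j=1..N. (z - \<beta> j)) / (\<Prod>j=1..N. (z - cnj (\<alpha> j))))"
  using main[OF f0 tpos N(1) lam_pos \<alpha>_circ \<alpha>_dist g_def f_form] by blast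

end
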